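(* Let $\Omega\subset\mathbb{R}^d$, $d\le3$, be a bounded polytopal domain with Lipschitz boundary, $\tau>0$, $w\in H^1_0(\Omega)$ and $\psi\in W^{2,\infty}(\Omega)$. Define \[ \mathcal{A}(w,v):=(w,v)+\tau\big(a(w,v)+b(w,v)\big), \] with $a(w,v):=\int_\Omega\nabla w\cdot\nabla v\,\mathrm{d}x$ and $b(w,v):=\int_\Omega (w\nabla\psi)\cdot\nabla v\,\mathrm{d}x$. If $\Delta\psi\le0$, then \[ \mathcal{A}(w,w)\ge\|w\|_{L^2(\Omega)}^2+\tau\|\nabla w\|_{L^2(\Omega)}^2. \] Alternatively, without any sign assumption on $\Delta\psi$, if \[ \tau<\frac{4}{C_S^2\|\Delta\psi\|_{L^3(\Omega)}^2}, \] then \[ \mathcal{A}(w,w)\ge\tfrac12\|w\|_{L^2(\Omega)}^2+\tfrac{\tau}{2}\|\nabla w\|_{L^2(\Omega)}^2. \]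
   Context: $(\cdot,\cdot)$ is the $L^2(\Omega)$ inner product. $C_S$ is the constant of the Sobolev embedding $H^1_0(\Omega)\hookrightarrow L^6(\Omega)$ (valid for $d\le3$), i.e. $\|v\|_{L^6(\Omega)}\le C_S\|\nabla v\|_{L^2(\Omega)}$ for all $v\in H^1_0(\Omega)$. *)

theory Defs
  imports "HOL-Analysis.Analysis"
begin

definition lipschitz_boundary :: "'a::euclidean_space set \<Rightarrow> bool" where
  "lipschitz_boundary \<Omega> \<longleftrightarrow>
     (\<forall>x\<in>frontier \<Omega>. \<exists>r>0. \<exists>e L g. norm e = 1 \<and>
        L-lipschitz_on {z. z \<bullet> e = 0} (g :: 'a \<Rightarrow> real) \<and>
        (\<forall>y\<in>ball x r. y \<in> \<Omega> \<longleftrightarrow> y \<bullet> e < g (y - (y \<bullet> e) *\<^sub>R e)))"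

definition bounded_polytopal_domain :: "'a::euclidean_space set \<Rightarrow> bool" where
  "bounded_polytopal_domain \<Omega> \<longleftrightarrow> open \<Omega> \<and> connected \<Omega> \<and> \<Omega> \<noteq> {} \<and> bounded \<Omega> \<and>
     (\<exists>P. finite P \<and> (\<forall>p\<in>P. polytope p) \<and> closure \<Omega> = \<Union>P)"

coinductive C_inf :: "('a::euclidean_space \<Rightarrow> real) \<Rightarrow> bool" where
  "(\<forall>x. f differentiable (at x)) \<Longrightarrow> continuous_on UNIV f \<Longrightarrow>
   (\<forall>i\<in>Basis. C_inf (\<lambda>x. frechet_derivative f (at x) i)) \<Longrightarrow> C_inf f"

definition grad :: "('a::euclidean_space \<Rightarrow> real) \<Rightarrow> 'a \<Rightarrow> 'a" where
  "grad f x = (\<Sum>i\<in>Basis. frechet_derivative f (at x) i *\<^sub>R i)"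

definition test_fun :: "'a::euclidean_space set \<Rightarrow> ('a \<Rightarrow> real) \<Rightarrow> bool" where
  "test_fun \<Omega> \<phi> \<longleftrightarrow> C_inf \<phi> \<and> compact (closure {x. \<phi> x \<noteq> 0}) \<and> closure {x. \<phi> x \<noteq> 0} \<subseteq> \<Omega>"

definition L2 :: "'a::euclidean_space set \<Rightarrow> ('a \<Rightarrow> 'b::euclidean_space) \<Rightarrow> bool" where
  "L2 \<Omega> f \<longleftrightarrow> f \<in> borel_measurable (restrict_space lebesgue \<Omega>) \<and>
     set_integrable lebesgue \<Omega> (\<lambda>x. (norm (f x))\<^sup>2)"

definition ess_bounded :: "'a::euclidean_space set \<Rightarrow> ('a \<Rightarrow> 'b::euclidean_space) \<Rightarrow> bool" where
  "ess_bounded \<Omega> f \<longleftrightarrow> f \<in> borel_measurable (restrict_space lebesgue \<Omega>) \<and>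
     (\<exists>C. AE x in lebesgue. x \<in> \<Omega> \<longrightarrow> norm (f x) \<le> C)"

definition locally_integrable :: "'a::euclidean_space set \<Rightarrow> ('a \<Rightarrow> 'b::euclidean_space) \<Rightarrow> bool" where
  "locally_integrable \<Omega> f \<longleftrightarrow> (\<forall>K. compact K \<and> K \<subseteq> \<Omega> \<longrightarrow> set_integrable lebesgue K f)"

definition weak_grad :: "'a::euclidean_space set \<Rightarrow> ('a \<Rightarrow> real) \<Rightarrow> ('a \<Rightarrow> 'a) \<Rightarrow> bool" where
  "weak_grad \<Omega> w G \<longleftrightarrow> locally_integrable \<Omega> w \<and> locally_integrable \<Omega> G \<and>
     (\<forall>\<phi>. test_fun \<Omega> \<phi> \<longrightarrow> (\<forall>i\<in>Basis.
        (LINT x:\<Omega>|lebesgue. w x * (grad \<phi> x \<bullet> i)) = - (LINT x:\<Omega>|lebesgue. (G x \<bullet> i) * \<phi> x)))"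

definition H10 :: "'a::euclidean_space set \<Rightarrow> ('a \<Rightarrow> real) \<Rightarrow> ('a \<Rightarrow> 'a) \<Rightarrow> bool" where
  "H10 \<Omega> w G \<longleftrightarrow> L2 \<Omega> w \<and> L2 \<Omega> G \<and>
     (\<exists>\<phi>::nat \<Rightarrow> 'a \<Rightarrow> real. (\<forall>n. test_fun \<Omega> (\<phi> n)) \<and>
        ((\<lambda>n. LINT x:\<Omega>|lebesgue. (\<phi> n x - w x)\<^sup>2) \<longlonglongrightarrow> 0) \<and>
        ((\<lambda>n. LINT x:\<Omega>|lebesgue. (norm (grad (\<phi> n) x - G x))\<^sup>2) \<longlonglongrightarrow> 0))"

text \<open>\<psi> \<in> W^{2,\<infinity>}(\<Omega>) with weak gradient G and weak Hessian H
  (H x i is the weak gradient of the i-th component of G).\<close>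
definition W2inf :: "'a::euclidean_space set \<Rightarrow> ('a \<Rightarrow> real) \<Rightarrow> ('a \<Rightarrow> 'a) \<Rightarrow> ('a \<Rightarrow> 'a \<Rightarrow> 'a) \<Rightarrow> bool" where
  "W2inf \<Omega> \<psi> G H \<longleftrightarrow> ess_bounded \<Omega> \<psi> \<and> ess_bounded \<Omega> G \<and> weak_grad \<Omega> \<psi> G \<and>
     (\<forall>i\<in>Basis. ess_bounded \<Omega> (\<lambda>x. H x i) \<and> weak_grad \<Omega> (\<lambda>x. G x \<bullet> i) (\<lambda>x. H x i))"

definition lap :: "('a::euclidean_space \<Rightarrow> 'a \<Rightarrow> 'a) \<Rightarrow> 'a \<Rightarrow> real" where
  "lap H x = (\<Sum>i\<in>Basis. H x i \<bullet> i)"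

definition L2_inner :: "'a::euclidean_space set \<Rightarrow> ('a \<Rightarrow> real) \<Rightarrow> ('a \<Rightarrow> real) \<Rightarrow> real" where
  "L2_inner \<Omega> w v = (LINT x:\<Omega>|lebesgue. w x * v x)"

definition Lp_norm :: "'a::euclidean_space set \<Rightarrow> real \<Rightarrow> ('a \<Rightarrow> 'b::euclidean_space) \<Rightarrow> real" where
  "Lp_norm \<Omega> p f = (LINT x:\<Omega>|lebesgue. norm (f x) powr p) powr (1 / p)"

definition form_a :: "'a::euclidean_space set \<Rightarrow> ('a \<Rightarrow> 'a) \<Rightarrow> ('a \<Rightarrow> 'a) \<Rightarrow> real" where
  "form_a \<Omega> Gw Gv = (LINT x:\<Omega>|lebesgue. Gw x \<bullet> Gv x)"

definition form_b :: "'a::euclidean_space set \<Rightarrow> ('a \<Rightarrow> 'a) \<Rightarrow> ('a \<Rightarrow> real) \<Rightarrow> ('a \<Rightarrow> 'a) \<Rightarrow> real" where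
  "form_b \<Omega> G\<psi> w Gv = (LINT x:\<Omega>|lebesgue. (w x *\<^sub>R G\<psi> x) \<bullet> Gv x)"

definition form_A :: "'a::euclidean_space set \<Rightarrow> real \<Rightarrow> ('a \<Rightarrow> 'a) \<Rightarrow>
    ('a \<Rightarrow> real) \<Rightarrow> ('a \<Rightarrow> 'a) \<Rightarrow> ('a \<Rightarrow> real) \<Rightarrow> ('a \<Rightarrow> 'a) \<Rightarrow> real" where
  "form_A \<Omega> \<tau> G\<psi> w Gw v Gv = L2_inner \<Omega> w v + \<tau> * (form_a \<Omega> Gw Gv + form_b \<Omega> G\<psi> w Gv)"

end

theory Submission
  imports Defs
begin


lemma C_inf_D:
  assumes "C_inf f"
  shows "\<forall>x. f differentiable (at x)" "continuous_on UNIV f"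
    "\<And>i. i \<in> Basis \<Longrightarrow> C_inf (\<lambda>x. frechet_derivative f (at x) i)"
  using assms by (auto elim: C_inf.cases)

definition okL :: "(('a::euclidean_space \<Rightarrow> real) \<times> ('a \<Rightarrow> real)) list \<Rightarrow> bool" where
  "okL L \<longleftrightarrow> (\<forall>p\<in>set L. C_inf (fst p) \<and> C_inf (snd p))"

definition spL :: "(('a::euclidean_space \<Rightarrow> real) \<times> ('a \<Rightarrow> real)) list \<Rightarrow> 'a \<Rightarrow> real" where
  "spL L x = sum_list (map (\<lambda>p. fst p x * snd p x) L)"

definition dL :: "'a \<Rightarrow> (('a::euclidean_space \<Rightarrow> real) \<times> ('a \<Rightarrow> real)) list \<Rightarrow> (('a \<Rightarrow> real) \<times> ('a \<Rightarrow> real)) list" where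
  "dL i L = concat (map (\<lambda>p. [(fst p, \<lambda>x. frechet_derivative (snd p) (at x) i),
                                (\<lambda>x. frechet_derivative (fst p) (at x) i, snd p)]) L)"

lemma spL_deriv:
  assumes "okL L"
  shows "(spL L has_derivative (\<lambda>v. sum_list (map (\<lambda>p. fst p x * frechet_derivative (snd p) (at x) v
            + frechet_derivative (fst p) (at x) v * snd p x) L))) (at x)"
  using assms
proof (induction L)
  case Nil
  then show ?case by (simp add: spL_def[abs_def])
next
  case (Cons p L)
  have fd: "(fst p has_derivative frechet_derivative (fst p) (at x)) (at x)"
    "(snd p has_derivative frechet_derivative (snd p) (at x)) (at x)"
    using Cons.prems C_inf_D(1) frechet_derivative_works unfolding okL_def by fastforce+
  have IH: "(spL L has_derivative (\<lambda>v. sum_list (map (\<lambda>p. fst p x * frechet_derivative (snd p) (at x) v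
            + frechet_derivative (fst p) (at x) v * snd p x) L))) (at x)"
    using Cons by (simp add: okL_def)
  have e: "spL (p # L) = (\<lambda>y. fst p y * snd p y + spL L y)"
    by (simp add: spL_def[abs_def])
  show ?case unfolding e
    using has_derivative_add[OF has_derivative_mult[OF fd] IH] by simp
qed

lemma spL_cont: "okL L \<Longrightarrow> continuous_on UNIV (spL L)"
proof (induction L)
  case Nil
  then show ?case by (simp add: spL_def[abs_def])
next
  case (Cons p L)
  have e: "spL (p # L) = (\<lambda>y. fst p y * snd p y + spL L y)"
    by (simp add: spL_def[abs_def])
  have "continuous_on UNIV (fst p)" "continuous_on UNIV (snd p)"
    using Cons.prems C_inf_D(2) unfolding okL_def by auto
  then show ?case unfolding e using Cons by (auto intro!: continuous_intros simp: okL_def)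
qed

lemma spL_Nil: "spL [] x = 0" by (simp add: spL_def)
lemma spL_Cons: "spL (p # L) x = fst p x * snd p x + spL L x" by (simp add: spL_def)
lemma dL_Cons: "dL i (p # L) = (fst p, \<lambda>x. frechet_derivative (snd p) (at x) i) #
   (\<lambda>x. frechet_derivative (fst p) (at x) i, snd p) # dL i L" by (simp add: dL_def)
lemma dL_Nil: "dL i [] = []" by (simp add: dL_def)

lemma spL_dL_aux: "sum_list (map (\<lambda>p. fst p x * frechet_derivative (snd p) (at x) i
            + frechet_derivative (fst p) (at x) i * snd p x) L) = spL (dL i L) x"
proof (induction L)
  case Nil then show ?case by (simp only: dL_Nil spL_Nil list.map sum_list.Nil)
next
  case (Cons p L)
  show ?case by (simp only: dL_Cons spL_Cons list.map sum_list.Cons Cons fst_conv snd_conv add.assoc)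
qed

lemma spL_dL: "okL L \<Longrightarrow> (\<lambda>x. frechet_derivative (spL L) (at x) i) = spL (dL i L)"
proof
  fix x assume "okL L"
  have "frechet_derivative (spL L) (at x) = (\<lambda>v. sum_list (map (\<lambda>p. fst p x * frechet_derivative (snd p) (at x) v
            + frechet_derivative (fst p) (at x) v * snd p x) L))"
    using frechet_derivative_at[OF spL_deriv[OF \<open>okL L\<close>], symmetric] .
  then show "frechet_derivative (spL L) (at x) i = spL (dL i L) x"
    by (simp only: spL_dL_aux)
qed

lemma okL_dL: "okL L \<Longrightarrow> i \<in> Basis \<Longrightarrow> okL (dL i L)"
  by (auto simp: okL_def dL_def intro: C_inf_D(3))

lemma spL_C_inf: "okL L \<Longrightarrow> C_inf (spL L)"
proof (rule C_inf.coinduct[where X = "\<lambda>h. \<exists>L. okL L \<and> h = spL L"])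
  assume "okL L" then show "\<exists>L'. okL L' \<and> spL L = spL L'" by blast
next
  fix h :: "'a \<Rightarrow> real" assume "\<exists>L. okL L \<and> h = spL L"
  then obtain L where L: "okL L" "h = spL L" by blast
  show "\<exists>f. h = f \<and> (\<forall>x. f differentiable at x) \<and> continuous_on UNIV f \<and>
          (\<forall>i\<in>Basis. (\<exists>L. okL L \<and> (\<lambda>x. frechet_derivative f (at x) i) = spL L) \<or>
                       C_inf (\<lambda>x. frechet_derivative f (at x) i))"
  proof (rule exI[of _ "spL L"], intro conjI ballI allI)
    show "h = spL L" by (rule L(2))
    show "spL L differentiable at x" for x
      using spL_deriv[OF L(1)] unfolding differentiable_def by blast
    show "continuous_on UNIV (spL L)" by (rule spL_cont[OF L(1)])
    fix i :: 'a assume "i \<in> Basis"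
    show "(\<exists>L'. okL L' \<and> (\<lambda>x. frechet_derivative (spL L) (at x) i) = spL L') \<or>
          C_inf (\<lambda>x. frechet_derivative (spL L) (at x) i)"
      using spL_dL[OF L(1)] okL_dL[OF L(1) \<open>i \<in> Basis\<close>] by blast
  qed
qed

lemma C_inf_mult:
  assumes "C_inf f" "C_inf g"
  shows "C_inf (\<lambda>x. f x * g x)"
proof -
  have "okL [(f,g)]" using assms by (simp add: okL_def)
  moreover have "spL [(f,g)] = (\<lambda>x. f x * g x)" by (simp add: spL_def[abs_def])
  ultimately show ?thesis using spL_C_inf by metis
qed



lemma grad_inner_Basis:
  assumes "i \<in> (Basis::'a::euclidean_space set)"
  shows "grad f x \<bullet> i = frechet_derivative f (at x) i"
  using assms by (simp add: grad_def inner_sum_left inner_Basis if_distrib sum.delta cong: if_cong)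

lemma grad_cont:
  assumes "C_inf f"
  shows "continuous_on UNIV (grad f)"
proof -
  have "continuous_on UNIV (\<lambda>x. frechet_derivative f (at x) i)" if "i \<in> Basis" for i
    using C_inf_D(2)[OF C_inf_D(3)[OF assms that]] .
  then show ?thesis unfolding grad_def[abs_def]
    by (auto intro!: continuous_intros)
qed

lemma grad_sq:
  assumes "C_inf f"
  shows "grad (\<lambda>x. f x * f x) x = (2 * f x) *\<^sub>R grad f x"
proof -
  have fd: "(f has_derivative frechet_derivative f (at x)) (at x)"
    using C_inf_D(1)[OF assms] frechet_derivative_works by blast
  have "frechet_derivative (\<lambda>x. f x * f x) (at x) = (\<lambda>h. f x * frechet_derivative f (at x) h + frechet_derivative f (at x) h * f x)"
    using has_derivative_mult[OF fd fd] frechet_derivative_at by metis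
  then show ?thesis
    by (simp add: grad_def scaleR_sum_right algebra_simps)
qed

lemma test_fun_sq:
  assumes "test_fun \<Omega> f"
  shows "test_fun \<Omega> (\<lambda>x. f x * f x)"
  using assms C_inf_mult unfolding test_fun_def by auto



definition bnd :: "'a measure \<Rightarrow> ('a \<Rightarrow> 'b::euclidean_space) \<Rightarrow> bool" where
  "bnd M f \<longleftrightarrow> f \<in> borel_measurable M \<and> (\<exists>B. AE x in M. norm (f x) \<le> B)"

lemma bnd_integrable: "finite_measure M \<Longrightarrow> bnd M f \<Longrightarrow> integrable M f"
  unfolding bnd_def using finite_measure.integrable_const_bound by blast

lemma bnd_I: "f \<in> borel_measurable M \<Longrightarrow> (AE x in M. norm (f x) \<le> B) \<Longrightarrow> bnd M f"
  unfolding bnd_def by blast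

lemma bnd_E: "bnd M f \<Longrightarrow> (\<And>B. f \<in> borel_measurable M \<Longrightarrow> (AE x in M. norm (f x) \<le> B) \<Longrightarrow> P) \<Longrightarrow> P"
  unfolding bnd_def by blast

lemma ae2: "(AE x in M. P x) \<Longrightarrow> (AE x in M. Q x) \<Longrightarrow> (\<And>x. P x \<Longrightarrow> Q x \<Longrightarrow> R x) \<Longrightarrow> AE x in M. R x"
  by (rule eventually_elim2)

lemma bnd_add: assumes "bnd M f" "bnd M g" shows "bnd M (\<lambda>x. f x + g x)"
proof -
  obtain B C where f: "f \<in> borel_measurable M" "AE x in M. norm (f x) \<le> B"
    and g: "g \<in> borel_measurable M" "AE x in M. norm (g x) \<le> C"
    using assms bnd_E by metis
  have "AE x in M. norm (f x + g x) \<le> B + C"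
    using f(2) g(2) by (rule ae2) (metis add_mono norm_triangle_ineq order_trans)
  then show ?thesis using borel_measurable_add[OF f(1) g(1)] bnd_I by blast
qed

lemma bnd_diff: assumes "bnd M f" "bnd M g" shows "bnd M (\<lambda>x. f x - g x)"
proof -
  obtain B C where f: "f \<in> borel_measurable M" "AE x in M. norm (f x) \<le> B"
    and g: "g \<in> borel_measurable M" "AE x in M. norm (g x) \<le> C"
    using assms bnd_E by metis
  have "AE x in M. norm (f x - g x) \<le> B + C"
    using f(2) g(2) by (rule ae2) (metis add_mono norm_triangle_ineq4 order_trans)
  then show ?thesis using borel_measurable_diff[OF f(1) g(1)] bnd_I by blast
qed

lemma bnd_mult: assumes "bnd M f" "bnd M g" shows "bnd M (\<lambda>x. f x * (g x :: real))"
proof -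
  obtain B C where f: "f \<in> borel_measurable M" "AE x in M. norm (f x) \<le> B"
    and g: "g \<in> borel_measurable M" "AE x in M. norm (g x) \<le> C"
    using assms bnd_E by metis
  have "AE x in M. norm (f x * g x) \<le> B * C"
    using f(2) g(2) by (rule ae2) (simp add: abs_mult mult_mono')
  then show ?thesis using borel_measurable_times[OF f(1) g(1)] bnd_I by blast
qed

lemma bnd_inner: assumes "bnd M f" "bnd M g" shows "bnd M (\<lambda>x. f x \<bullet> g x)"
proof -
  obtain B C where f: "f \<in> borel_measurable M" "AE x in M. norm (f x) \<le> B"
    and g: "g \<in> borel_measurable M" "AE x in M. norm (g x) \<le> C"
    using assms bnd_E by metis
  have "AE x in M. norm (f x \<bullet> g x) \<le> B * C"
    using f(2) g(2) by (rule ae2) (metis Cauchy_Schwarz_ineq2 mult_mono' norm_ge_zero order_trans real_norm_def)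
  then show ?thesis using borel_measurable_inner[OF f(1) g(1)] bnd_I by blast
qed

lemma bnd_scaleR: assumes "bnd M f" "bnd M g" shows "bnd M (\<lambda>x. f x *\<^sub>R g x)"
proof -
  obtain B C where f: "f \<in> borel_measurable M" "AE x in M. norm (f x) \<le> B"
    and g: "g \<in> borel_measurable M" "AE x in M. norm (g x) \<le> C"
    using assms bnd_E by metis
  have "AE x in M. norm (f x *\<^sub>R g x) \<le> B * C"
    using f(2) g(2) by (rule ae2) (simp add: mult_mono')
  then show ?thesis using borel_measurable_scaleR[OF f(1) g(1)] bnd_I by blast
qed

lemma bnd_const: "bnd M (\<lambda>x. c)"
  by (rule bnd_I[of _ _ "norm c"]) auto

lemma bnd_sum: "finite I \<Longrightarrow> (\<And>i. i \<in> I \<Longrightarrow> bnd M (f i)) \<Longrightarrow> bnd M (\<lambda>x. \<Sum>i\<in>I. f i x)"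
proof (induction I rule: finite_induct)
  case empty then show ?case by (simp add: bnd_const)
next
  case (insert a F)
  then have "bnd M (\<lambda>x. f a x + (\<Sum>i\<in>F. f i x))" by (intro bnd_add) auto
  then show ?case using insert(1,2) by simp
qed

lemma bnd_power: "bnd M f \<Longrightarrow> bnd M (\<lambda>x. (f x :: real) ^ n)"
proof (induction n)
  case 0 then show ?case by (simp add: bnd_const)
next
  case (Suc n) then show ?case using bnd_mult[of M f "\<lambda>x. f x ^ n"] by simp
qed

lemma bnd_abs: assumes "bnd M f" shows "bnd M (\<lambda>x. \<bar>f x :: real\<bar>)"
proof -
  obtain B where f: "f \<in> borel_measurable M" "AE x in M. norm (f x) \<le> B"
    using assms bnd_E by metis
  show ?thesis by (rule bnd_I[OF borel_measurable_abs[OF f(1)]]) (use f(2) in simp)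
qed

lemma bnd_norm: assumes "bnd M f" shows "bnd M (\<lambda>x. norm (f x))"
proof -
  obtain B where f: "f \<in> borel_measurable M" "AE x in M. norm (f x) \<le> B"
    using assms bnd_E by metis
  show ?thesis by (rule bnd_I[OF measurable_compose[OF f(1) borel_measurable_norm]]) (use f(2) in simp)
qed

lemma bnd_cont:
  assumes "bounded \<Omega>" "\<Omega> \<in> sets lebesgue" "continuous_on UNIV f"
  shows "bnd (lebesgue_on \<Omega>) f"
proof -
  have "compact (closure \<Omega>)" using assms(1) by (simp add: compact_closure)
  then have "compact (f ` closure \<Omega>)"
    using assms(3) compact_continuous_image continuous_on_subset by blast
  then obtain B where B: "\<And>y. y \<in> f ` closure \<Omega> \<Longrightarrow> norm y \<le> B"
    using compact_imp_bounded bounded_iff by metis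
  have "AE x in lebesgue_on \<Omega>. norm (f x) \<le> B"
    by (rule AE_I2) (use B closure_subset in \<open>auto simp: space_restrict_space\<close>)
  moreover have "f \<in> borel_measurable (lebesgue_on \<Omega>)"
    using continuous_imp_measurable_on_sets_lebesgue[OF continuous_on_subset[OF assms(3)] assms(2)] by auto
  ultimately show ?thesis unfolding bnd_def by blast
qed

lemma sets_Omega:
  assumes "open \<Omega>" "bounded \<Omega>"
  shows "\<Omega> \<in> sets lebesgue" "finite_measure (lebesgue_on \<Omega>)"
  using lmeasurable_open[OF assms(2,1)] finite_measure_lebesgue_on fmeasurableD by auto

lemma LINT_restrict:
  fixes f :: "_ \<Rightarrow> 'b::{banach,second_countable_topology}"
  assumes "\<Omega> \<in> sets lebesgue"
  shows "(LINT x:\<Omega>|lebesgue. f x) = integral\<^sup>L (lebesgue_on \<Omega>) f"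
  using integral_restrict_space[of \<Omega> lebesgue f] assms by (simp add: set_lebesgue_integral_def)

lemma set_integrable_restrict:
  fixes f :: "_ \<Rightarrow> 'b::{banach,second_countable_topology}"
  assumes "\<Omega> \<in> sets lebesgue"
  shows "set_integrable lebesgue \<Omega> f \<longleftrightarrow> integrable (lebesgue_on \<Omega>) f"
  using integrable_restrict_space[of \<Omega> lebesgue f] assms by (simp add: set_integrable_def)



lemma real_cs_aux:
  fixes X A B :: real
  assumes "\<And>t. t > 0 \<Longrightarrow> X \<le> (t * A + B / t) / 2" "A \<ge> 0" "B \<ge> 0"
  shows "X \<le> sqrt A * sqrt B"
proof (cases "A > 0 \<and> B > 0")
  case True
  define t where "t = sqrt B / sqrt A"
  have t: "t > 0" using True by (simp add: t_def)
  have "t * A = sqrt A * sqrt B" using True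
    by (simp add: t_def field_simps)
  moreover have "B / t = sqrt A * sqrt B" using True
    by (simp add: t_def field_simps)
  ultimately show ?thesis using assms(1)[OF t] by simp
next
  case False
  then have "A = 0 \<or> B = 0" using assms by auto
  show ?thesis
  proof (rule ccontr)
    assume "\<not> ?thesis"
    then have X: "X > 0" using \<open>A = 0 \<or> B = 0\<close> by auto
    show False
    proof (cases "A = 0")
      case True
      define t where "t = (B + 1) / X"
      have t: "t > 0" using X assms(2,3) by (simp add: t_def)
      have "X \<le> B / t / 2" using assms(1)[OF t] True by simp
      also have "\<dots> = B * X / (2 * (B + 1))" using X assms(2,3) by (simp add: t_def field_simps)
      also have "\<dots> < X" using X assms(2,3) mult_nonneg_nonneg[OF assms(3) less_imp_le[OF X]] by (simp add: field_simps, linarith)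
      finally show False by simp
    next
      case False
      then have B: "B = 0" using \<open>A = 0 \<or> B = 0\<close> by simp
      define t where "t = X / (A + 1)"
      have t: "t > 0" using X assms(2,3) by (simp add: t_def)
      have "X \<le> t * A / 2" using assms(1)[OF t] B by simp
      also have "\<dots> = X * A / (2 * (A + 1))" using X assms(2,3) by (simp add: t_def field_simps)
      also have "\<dots> < X" using X assms(2,3) mult_nonneg_nonneg[OF assms(2) less_imp_le[OF X]] by (simp add: field_simps, linarith)
      finally show False by simp
    qed
  qed
qed

lemma pw_aux:
  fixes a b t :: real
  assumes "t > 0"
  shows "\<bar>a * b\<bar> \<le> (t * a\<^sup>2 + b\<^sup>2 / t) / 2"
proof -
  have "0 \<le> (t * \<bar>a\<bar> - \<bar>b\<bar>)\<^sup>2" by simp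
  then have "2 * t * \<bar>a * b\<bar> \<le> t\<^sup>2 * a\<^sup>2 + b\<^sup>2"
    by (simp add: power2_eq_square algebra_simps abs_mult)
  then show ?thesis using assms by (simp add: field_simps power2_eq_square)
qed
lemma sq_aux:
  fixes a b :: real
  shows "(a + b)\<^sup>2 \<le> 2 * a\<^sup>2 + 2 * b\<^sup>2"
proof -
  have "0 \<le> (a - b)\<^sup>2" by simp
  then show ?thesis by (simp add: power2_eq_square algebra_simps)
qed

lemma CS_int:
  fixes f g :: "'a \<Rightarrow> real"
  assumes [measurable]: "f \<in> borel_measurable M" "g \<in> borel_measurable M"
    and fi: "integrable M (\<lambda>x. (f x)\<^sup>2)" and gi: "integrable M (\<lambda>x. (g x)\<^sup>2)"
  shows "integrable M (\<lambda>x. f x * g x)"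
    "(\<integral>x. \<bar>f x * g x\<bar> \<partial>M) \<le> sqrt (\<integral>x. (f x)\<^sup>2 \<partial>M) * sqrt (\<integral>x. (g x)\<^sup>2 \<partial>M)"
proof -
  have pw: "\<bar>f x * g x\<bar> \<le> (t * (f x)\<^sup>2 + (g x)\<^sup>2 / t) / 2" if "t > 0" for t x
    using pw_aux[OF that] .
  have i1: "integrable M (\<lambda>x. ((f x)\<^sup>2 + (g x)\<^sup>2) / 2)" using fi gi by auto
  show int: "integrable M (\<lambda>x. f x * g x)"
    by (rule Bochner_Integration.integrable_bound[OF i1]) (auto intro!: AE_I2 simp: pw[of 1, simplified])
  show "(\<integral>x. \<bar>f x * g x\<bar> \<partial>M) \<le> sqrt (\<integral>x. (f x)\<^sup>2 \<partial>M) * sqrt (\<integral>x. (g x)\<^sup>2 \<partial>M)"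
  proof (rule real_cs_aux)
    fix t :: real assume t: "t > 0"
    have "(\<integral>x. \<bar>f x * g x\<bar> \<partial>M) \<le> (\<integral>x. (t * (f x)\<^sup>2 + (g x)\<^sup>2 / t) / 2 \<partial>M)"
      using int fi gi pw[OF t] by (intro integral_mono) auto
    also have "\<dots> = (t * (\<integral>x. (f x)\<^sup>2 \<partial>M) + (\<integral>x. (g x)\<^sup>2 \<partial>M) / t) / 2"
      using fi gi by simp
    finally show "(\<integral>x. \<bar>f x * g x\<bar> \<partial>M) \<le> (t * (\<integral>x. (f x)\<^sup>2 \<partial>M) + (\<integral>x. (g x)\<^sup>2 \<partial>M) / t) / 2" .
  qed auto
qed

lemma sq_diff_int:
  fixes F G :: "'a \<Rightarrow> 'b::euclidean_space"
  assumes [measurable]: "F \<in> borel_measurable M" "G \<in> borel_measurable M"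
    and "integrable M (\<lambda>x. (norm (F x))\<^sup>2)" "integrable M (\<lambda>x. (norm (G x))\<^sup>2)"
  shows "integrable M (\<lambda>x. (norm (F x - G x))\<^sup>2)"
proof -
  have i: "integrable M (\<lambda>x. 2 * (norm (F x))\<^sup>2 + 2 * (norm (G x))\<^sup>2)" using assms by auto
  have b: "norm ((norm (F x - G x))\<^sup>2) \<le> norm (2 * (norm (F x))\<^sup>2 + 2 * (norm (G x))\<^sup>2)" for x
  proof -
    have "norm (F x - G x) \<le> norm (F x) + norm (G x)" by (rule norm_triangle_ineq4)
    then have "(norm (F x - G x))\<^sup>2 \<le> (norm (F x) + norm (G x))\<^sup>2" by (simp add: power_mono)
    also have "\<dots> \<le> 2 * (norm (F x))\<^sup>2 + 2 * (norm (G x))\<^sup>2"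
      by (rule sq_aux)
    finally show ?thesis by simp
  qed
  show ?thesis by (rule Bochner_Integration.integrable_bound[OF i]) (use b in auto)
qed



lemma young_aux:
  fixes a t :: real
  assumes "a \<ge> 0" "t \<ge> 0"
  shows "3 * (a^2 * t) \<le> 2 * a^3 + t^3"
proof -
  have "0 \<le> (a - t)^2 * (2*a + t)" using assms by simp
  also have "(a - t)^2 * (2*a + t) = 2 * a^3 + t^3 - 3 * (a^2 * t)"
    by (simp add: power2_eq_square power3_eq_cube algebra_simps)
  finally show ?thesis by simp
qed

lemma young3:
  fixes a b c :: real
  assumes "a \<ge> 0" "b \<ge> 0" "c \<ge> 0"
  shows "a * b * c \<le> a^3/3 + b^6/6 + c^2/2"
proof -
  have 1: "a * b * c \<le> (a*b)^2/2 + c^2/2"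
    using sum_squares_bound[of "a*b" c] by (simp add: power2_eq_square algebra_simps)
  have "3 * (a^2 * b^2) \<le> 2 * a^3 + (b^2)^3" using young_aux[OF assms(1), of "b^2"] by simp
  moreover have "(b^2)^3 = b^6" by (simp flip: power_mult)
  ultimately have "(a*b)^2 \<le> 2*a^3/3 + b^6/3"
    by (simp add: power_mult_distrib)
  then show ?thesis using 1 by simp
qed


lemma powr_inv_pow:
  fixes A :: real
  assumes "A > 0" "n > 0"
  shows "(A powr (1 / real n)) ^ n = A"
  using assms by (simp add: powr_realpow[symmetric] powr_powr)

lemma holder3:
  fixes h w :: "'a \<Rightarrow> real"
  assumes [measurable]: "h \<in> borel_measurable M" "w \<in> borel_measurable M"
    and i3: "integrable M (\<lambda>x. \<bar>h x\<bar>^3)" and i6: "integrable M (\<lambda>x. (w x)^6)"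
    and i2: "integrable M (\<lambda>x. (w x)^2)" and ihw: "integrable M (\<lambda>x. h x * (w x)^2)"
  shows "\<bar>\<integral>x. h x * (w x)^2 \<partial>M\<bar> \<le>
     (\<integral>x. \<bar>h x\<bar>^3 \<partial>M) powr (1/3) * (\<integral>x. (w x)^6 \<partial>M) powr (1/6) * (\<integral>x. (w x)^2 \<partial>M) powr (1/2)"
proof -
  define A where "A = (\<integral>x. \<bar>h x\<bar>^3 \<partial>M)"
  define B where "B = (\<integral>x. (w x)^6 \<partial>M)"
  define C where "C = (\<integral>x. (w x)^2 \<partial>M)"
  have A0: "A \<ge> 0" "B \<ge> 0" "C \<ge> 0" unfolding A_def B_def C_def
    by (auto intro!: integral_nonneg_AE simp: zero_le_even_power)
  have iabs: "integrable M (\<lambda>x. \<bar>h x\<bar> * (w x)^2)"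
    using integrable_abs[OF ihw] by (simp add: abs_mult)
  have 1: "\<bar>\<integral>x. h x * (w x)^2 \<partial>M\<bar> \<le> (\<integral>x. \<bar>h x\<bar> * (w x)^2 \<partial>M)"
    using integral_abs_bound[of M "\<lambda>x. h x * (w x)^2"] by (simp add: abs_mult)
  have rhs0: "0 \<le> A powr (1/3) * B powr (1/6) * C powr (1/2)" by simp
  show ?thesis
  proof (cases "A = 0 \<or> B = 0 \<or> C = 0")
    case True
    have "AE x in M. \<bar>h x\<bar> * (w x)^2 = 0"
    proof -
      { assume "A = 0"
        then have "AE x in M. \<bar>h x\<bar>^3 = 0"
          using integral_nonneg_eq_0_iff_AE[OF i3] unfolding A_def by auto
        then have ?thesis by (rule eventually_mono) simp }
      moreover
      { assume "B = 0"
        then have "AE x in M. (w x)^6 = 0"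
          using integral_nonneg_eq_0_iff_AE[OF i6] unfolding B_def by (auto simp: zero_le_even_power)
        then have ?thesis by (rule eventually_mono) simp }
      moreover
      { assume "C = 0"
        then have "AE x in M. (w x)^2 = 0"
          using integral_nonneg_eq_0_iff_AE[OF i2] unfolding C_def by auto
        then have ?thesis by (rule eventually_mono) simp }
      ultimately show ?thesis using True by blast
    qed
    then have "(\<integral>x. \<bar>h x\<bar> * (w x)^2 \<partial>M) = 0"
      using integral_cong_AE[of "\<lambda>x. \<bar>h x\<bar> * (w x)^2" M "\<lambda>x. 0"] by simp
    then show ?thesis using 1 rhs0 unfolding A_def B_def C_def by simp
  next
    case False
    then have pos: "A > 0" "B > 0" "C > 0" using A0 by auto
    define \<alpha> where "\<alpha> = A powr (1/3)"
    define \<beta> where "\<beta> = B powr (1/6)"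
    define \<gamma> where "\<gamma> = C powr (1/2)"
    have abg: "\<alpha> > 0" "\<beta> > 0" "\<gamma> > 0" using pos by (auto simp: \<alpha>_def \<beta>_def \<gamma>_def)
    have a3: "\<alpha>^3 = A" using powr_inv_pow[OF pos(1), of 3] by (simp add: \<alpha>_def)
    have b6: "\<beta>^6 = B" using powr_inv_pow[OF pos(2), of 6] by (simp add: \<beta>_def)
    have c2: "\<gamma>^2 = C" using powr_inv_pow[OF pos(3), of 2] by (simp add: \<gamma>_def)
    define P where "P = \<alpha>*\<beta>*\<gamma>"
    have P: "P > 0" using abg by (simp add: P_def)
    have pw: "\<bar>h x\<bar> * (w x)^2 \<le> P * ((\<bar>h x\<bar>^3/\<alpha>^3)/3 + ((w x)^6/\<beta>^6)/6 + ((w x)^2/\<gamma>^2)/2)" for x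
    proof -
      have y: "(\<bar>h x\<bar>/\<alpha>) * (\<bar>w x\<bar>/\<beta>) * (\<bar>w x\<bar>/\<gamma>) \<le> (\<bar>h x\<bar>/\<alpha>)^3/3 + (\<bar>w x\<bar>/\<beta>)^6/6 + (\<bar>w x\<bar>/\<gamma>)^2/2"
        using abg by (intro young3) auto
      have e1: "(\<bar>h x\<bar>/\<alpha>) * (\<bar>w x\<bar>/\<beta>) * (\<bar>w x\<bar>/\<gamma>) = (\<bar>h x\<bar> * (w x)^2) / P"
        unfolding P_def power2_eq_square by (simp add: abs_mult_self_eq)
      have e2: "(\<bar>h x\<bar>/\<alpha>)^3 = \<bar>h x\<bar>^3/\<alpha>^3" "(\<bar>w x\<bar>/\<beta>)^6 = (w x)^6/\<beta>^6" "(\<bar>w x\<bar>/\<gamma>)^2 = (w x)^2/\<gamma>^2"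
        by (simp_all only: power_divide power_even_abs_numeral even_numeral)
      have "(\<bar>h x\<bar> * (w x)^2) / P \<le> (\<bar>h x\<bar>^3/\<alpha>^3)/3 + ((w x)^6/\<beta>^6)/6 + ((w x)^2/\<gamma>^2)/2"
        using y unfolding e1 e2 .
      then show ?thesis using P by (simp only: pos_divide_le_eq mult.commute)
    qed
    have "(\<integral>x. \<bar>h x\<bar> * (w x)^2 \<partial>M) \<le> (\<integral>x. P * ((\<bar>h x\<bar>^3/\<alpha>^3)/3 + ((w x)^6/\<beta>^6)/6 + ((w x)^2/\<gamma>^2)/2) \<partial>M)"
      using iabs i3 i6 i2 pw by (intro integral_mono) auto
    also have "\<dots> = P * ((A/\<alpha>^3)/3 + (B/\<beta>^6)/6 + (C/\<gamma>^2)/2)"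
      using i3 i6 i2 unfolding A_def B_def C_def by simp
    also have "\<dots> = P" using a3 b6 c2 pos by simp
    finally have "(\<integral>x. \<bar>h x\<bar> * (w x)^2 \<partial>M) \<le> \<alpha>*\<beta>*\<gamma>" unfolding P_def .
    then show ?thesis using 1 unfolding \<alpha>_def \<beta>_def \<gamma>_def A_def B_def C_def by linarith
  qed
qed



lemma sq_diff_int_real:
  fixes f g :: "'a \<Rightarrow> real"
  assumes "f \<in> borel_measurable M" "g \<in> borel_measurable M"
    "integrable M (\<lambda>x. (f x)\<^sup>2)" "integrable M (\<lambda>x. (g x)\<^sup>2)"
  shows "integrable M (\<lambda>x. (f x - g x)\<^sup>2)"
  using sq_diff_int[of f M g] assms by simp

lemma bnd_bound_nonneg:
  assumes "bnd M f"
  obtains B where "B \<ge> 0" "f \<in> borel_measurable M" "AE x in M. norm (f x) \<le> B"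
proof -
  obtain B where f: "f \<in> borel_measurable M" "AE x in M. norm (f x) \<le> B"
    using assms bnd_E by metis
  have "AE x in M. norm (f x) \<le> max 0 B" using f(2) by (rule eventually_mono) simp
  then show ?thesis using that f(1) by (meson max.cobounded1)
qed

lemma tendsto_by_bound:
  fixes x :: "nat \<Rightarrow> real"
  assumes "\<And>n. \<bar>x n - l\<bar> \<le> c n" "c \<longlonglongrightarrow> 0"
  shows "x \<longlonglongrightarrow> l"
proof -
  have "(\<lambda>n. x n - l) \<longlonglongrightarrow> 0"
    by (rule Lim_null_comparison[OF _ assms(2)]) (use assms(1) in simp)
  then show ?thesis by (rule LIM_zero_cancel)
qed

lemma conv_b:
  fixes \<phi> :: "nat \<Rightarrow> 'a \<Rightarrow> real" and d\<phi> :: "nat \<Rightarrow> 'a \<Rightarrow> 'b::euclidean_space"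
  assumes fin: "finite_measure M"
    and [measurable]: "w \<in> borel_measurable M" "Gw \<in> borel_measurable M"
    and iw: "integrable M (\<lambda>x. (w x)\<^sup>2)" and iGw: "integrable M (\<lambda>x. (norm (Gw x))\<^sup>2)"
    and G: "bnd M G" and p: "\<And>n. bnd M (\<phi> n)" and dp: "\<And>n. bnd M (d\<phi> n)"
    and ca: "(\<lambda>n. \<integral>x. (\<phi> n x - w x)\<^sup>2 \<partial>M) \<longlonglongrightarrow> 0"
    and cd: "(\<lambda>n. \<integral>x. (norm (d\<phi> n x - Gw x))\<^sup>2 \<partial>M) \<longlonglongrightarrow> 0"
  shows "(\<lambda>n. \<integral>x. \<phi> n x * (G x \<bullet> d\<phi> n x) \<partial>M) \<longlonglongrightarrow> (\<integral>x. w x * (G x \<bullet> Gw x) \<partial>M)"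
proof -
  obtain B where B: "B \<ge> 0" and [measurable]: "G \<in> borel_measurable M" and GB: "AE x in M. norm (G x) \<le> B"
    using bnd_bound_nonneg[OF G] by metis
  have [measurable]: "\<phi> n \<in> borel_measurable M" "d\<phi> n \<in> borel_measurable M" for n
    using p dp bnd_def by blast+
  have ip: "integrable M (\<lambda>x. (\<phi> n x)\<^sup>2)" for n
    by (rule bnd_integrable[OF fin bnd_power[OF p]])
  have idp: "integrable M (\<lambda>x. (norm (d\<phi> n x))\<^sup>2)" for n
    by (rule bnd_integrable[OF fin bnd_power[OF bnd_norm[OF dp]]])
  have ia: "integrable M (\<lambda>x. (\<phi> n x - w x)\<^sup>2)" for n
    by (rule sq_diff_int_real) (auto intro: ip iw)
  have id: "integrable M (\<lambda>x. (norm (d\<phi> n x - Gw x))\<^sup>2)" for n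
    by (rule sq_diff_int) (auto intro: idp iGw)
  have iGw': "integrable M (\<lambda>x. (norm (Gw x))\<^sup>2)" using iGw .
  define a where "a n = (\<integral>x. (\<phi> n x - w x)\<^sup>2 \<partial>M)" for n
  define d where "d n = (\<integral>x. (norm (d\<phi> n x - Gw x))\<^sup>2 \<partial>M)" for n
  define W where "W = (\<integral>x. (w x)\<^sup>2 \<partial>M)"
  define D where "D = (\<integral>x. (norm (Gw x))\<^sup>2 \<partial>M)"
  have m1: "(\<lambda>x. \<phi> n x - w x) \<in> borel_measurable M" for n by measurable
  have m2: "(\<lambda>x. norm (d\<phi> n x - Gw x)) \<in> borel_measurable M" for n by measurable
  have m3: "(\<lambda>x. norm (Gw x)) \<in> borel_measurable M" by measurable
  have cs1: "integrable M (\<lambda>x. (\<phi> n x - w x) * norm (d\<phi> n x - Gw x))"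
     "(\<integral>x. \<bar>(\<phi> n x - w x) * norm (d\<phi> n x - Gw x)\<bar> \<partial>M) \<le> sqrt (a n) * sqrt (d n)" for n
    using CS_int[OF m1 m2 ia id] unfolding a_def d_def by auto
  have cs2: "integrable M (\<lambda>x. (\<phi> n x - w x) * norm (Gw x))"
     "(\<integral>x. \<bar>(\<phi> n x - w x) * norm (Gw x)\<bar> \<partial>M) \<le> sqrt (a n) * sqrt D" for n
    using CS_int[OF m1 m3 ia iGw] unfolding a_def D_def by auto
  have cs3: "integrable M (\<lambda>x. w x * norm (d\<phi> n x - Gw x))"
     "(\<integral>x. \<bar>w x * norm (d\<phi> n x - Gw x)\<bar> \<partial>M) \<le> sqrt W * sqrt (d n)" for n
    using CS_int[OF _ m2 iw id] unfolding W_def d_def by auto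
  have i1: "integrable M (\<lambda>x. \<bar>\<phi> n x - w x\<bar> * norm (d\<phi> n x - Gw x))" for n
    using integrable_abs[OF cs1(1)] by (simp add: abs_mult)
  have i2: "integrable M (\<lambda>x. \<bar>\<phi> n x - w x\<bar> * norm (Gw x))" for n
    using integrable_abs[OF cs2(1)] by (simp add: abs_mult)
  have i3: "integrable M (\<lambda>x. \<bar>w x\<bar> * norm (d\<phi> n x - Gw x))" for n
    using integrable_abs[OF cs3(1)] by (simp add: abs_mult)
  have b1: "(\<integral>x. \<bar>\<phi> n x - w x\<bar> * norm (d\<phi> n x - Gw x) \<partial>M) \<le> sqrt (a n) * sqrt (d n)" for n
    using cs1(2) by (simp add: abs_mult)
  have b2: "(\<integral>x. \<bar>\<phi> n x - w x\<bar> * norm (Gw x) \<partial>M) \<le> sqrt (a n) * sqrt D" for n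
    using cs2(2) by (simp add: abs_mult)
  have b3: "(\<integral>x. \<bar>w x\<bar> * norm (d\<phi> n x - Gw x) \<partial>M) \<le> sqrt W * sqrt (d n)" for n
    using cs3(2) by (simp add: abs_mult)
  have iwG0: "integrable M (\<lambda>x. \<bar>w x\<bar> * norm (Gw x))"
    using integrable_abs[OF CS_int(1)[OF _ m3 iw iGw]] by (simp add: abs_mult)
  have iwG: "integrable M (\<lambda>x. w x * (G x \<bullet> Gw x))"
  proof (rule Bochner_Integration.integrable_bound[OF integrable_mult_right[OF iwG0, of B]])
    show "AE x in M. norm (w x * (G x \<bullet> Gw x)) \<le> norm (B * (\<bar>w x\<bar> * norm (Gw x)))"
      using GB
    proof (rule eventually_mono)
      fix x assume "norm (G x) \<le> B"
      then have "\<bar>G x \<bullet> Gw x\<bar> \<le> B * norm (Gw x)"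
        by (metis Cauchy_Schwarz_ineq2 mult_right_mono norm_ge_zero order_trans)
      then have "\<bar>w x\<bar> * \<bar>G x \<bullet> Gw x\<bar> \<le> \<bar>w x\<bar> * (B * norm (Gw x))"
        by (rule mult_left_mono) simp
      then show "norm (w x * (G x \<bullet> Gw x)) \<le> norm (B * (\<bar>w x\<bar> * norm (Gw x)))"
        using B by (simp add: abs_mult mult_ac)
    qed
  qed simp
  have ipn: "integrable M (\<lambda>x. \<phi> n x * (G x \<bullet> d\<phi> n x))" for n
    by (rule bnd_integrable[OF fin bnd_mult[OF p bnd_inner[OF G dp]]])
  have pw: "\<bar>\<phi> n x * (G x \<bullet> d\<phi> n x) - w x * (G x \<bullet> Gw x)\<bar> \<le>
      B * (\<bar>\<phi> n x - w x\<bar> * norm (d\<phi> n x - Gw x) + \<bar>\<phi> n x - w x\<bar> * norm (Gw x) + \<bar>w x\<bar> * norm (d\<phi> n x - Gw x))"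
    if GxB: "norm (G x) \<le> B" for n x
  proof -
    define u where "u = \<phi> n x - w x"
    define v where "v = d\<phi> n x - Gw x"
    have ev: "u *\<^sub>R v + u *\<^sub>R Gw x + w x *\<^sub>R v = \<phi> n x *\<^sub>R d\<phi> n x - w x *\<^sub>R Gw x"
      unfolding u_def v_def by (simp add: scaleR_diff_left scaleR_diff_right)
    have e: "\<phi> n x * (G x \<bullet> d\<phi> n x) - w x * (G x \<bullet> Gw x) = G x \<bullet> (u *\<^sub>R v + u *\<^sub>R Gw x + w x *\<^sub>R v)"
      unfolding ev by (simp add: inner_diff_right)
    have "norm (u *\<^sub>R v + u *\<^sub>R Gw x + w x *\<^sub>R v) \<le> norm (u *\<^sub>R v) + norm (u *\<^sub>R Gw x) + norm (w x *\<^sub>R v)"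
      by (meson add_mono_thms_linordered_semiring(3) norm_triangle_ineq order_trans)
    then have n: "norm (u *\<^sub>R v + u *\<^sub>R Gw x + w x *\<^sub>R v) \<le> \<bar>u\<bar> * norm v + \<bar>u\<bar> * norm (Gw x) + \<bar>w x\<bar> * norm v"
      by simp
    have "\<bar>G x \<bullet> (u *\<^sub>R v + u *\<^sub>R Gw x + w x *\<^sub>R v)\<bar> \<le> norm (G x) * norm (u *\<^sub>R v + u *\<^sub>R Gw x + w x *\<^sub>R v)"
      by (rule Cauchy_Schwarz_ineq2)
    also have "\<dots> \<le> B * (\<bar>u\<bar> * norm v + \<bar>u\<bar> * norm (Gw x) + \<bar>w x\<bar> * norm v)"
      by (rule mult_mono[OF GxB n]) (use B in auto)
    finally show ?thesis unfolding e u_def v_def .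
  qed
  have bound: "\<bar>(\<integral>x. \<phi> n x * (G x \<bullet> d\<phi> n x) \<partial>M) - (\<integral>x. w x * (G x \<bullet> Gw x) \<partial>M)\<bar>
      \<le> B * (sqrt (a n) * sqrt (d n) + sqrt (a n) * sqrt D + sqrt W * sqrt (d n))" for n
  proof -
    have "\<bar>(\<integral>x. \<phi> n x * (G x \<bullet> d\<phi> n x) \<partial>M) - (\<integral>x. w x * (G x \<bullet> Gw x) \<partial>M)\<bar>
        = \<bar>\<integral>x. \<phi> n x * (G x \<bullet> d\<phi> n x) - w x * (G x \<bullet> Gw x) \<partial>M\<bar>"
      using ipn iwG by simp
    also have "\<dots> \<le> (\<integral>x. \<bar>\<phi> n x * (G x \<bullet> d\<phi> n x) - w x * (G x \<bullet> Gw x)\<bar> \<partial>M)"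
      by (rule integral_abs_bound)
    also have "\<dots> \<le> (\<integral>x. B * (\<bar>\<phi> n x - w x\<bar> * norm (d\<phi> n x - Gw x) + \<bar>\<phi> n x - w x\<bar> * norm (Gw x) + \<bar>w x\<bar> * norm (d\<phi> n x - Gw x)) \<partial>M)"
      by (rule integral_mono_AE) (use ipn iwG i1 i2 i3 GB pw in \<open>auto elim!: eventually_mono\<close>)
    also have "\<dots> = B * ((\<integral>x. \<bar>\<phi> n x - w x\<bar> * norm (d\<phi> n x - Gw x) \<partial>M) + (\<integral>x. \<bar>\<phi> n x - w x\<bar> * norm (Gw x) \<partial>M) + (\<integral>x. \<bar>w x\<bar> * norm (d\<phi> n x - Gw x) \<partial>M))"
      using i1 i2 i3 by simp
    also have "\<dots> \<le> B * (sqrt (a n) * sqrt (d n) + sqrt (a n) * sqrt D + sqrt W * sqrt (d n))"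
      using b1 b2 b3 B by (intro mult_left_mono add_mono) auto
    finally show ?thesis .
  qed
  have "(\<lambda>n. B * (sqrt (a n) * sqrt (d n) + sqrt (a n) * sqrt D + sqrt W * sqrt (d n))) \<longlonglongrightarrow>
        B * (sqrt 0 * sqrt 0 + sqrt 0 * sqrt D + sqrt W * sqrt 0)"
  proof -
    have a0: "(\<lambda>n. sqrt (a n)) \<longlonglongrightarrow> 0"
      using tendsto_real_sqrt[OF ca] unfolding a_def by simp
    have d0: "(\<lambda>n. sqrt (d n)) \<longlonglongrightarrow> 0"
      using tendsto_real_sqrt[OF cd] unfolding d_def by simp
    show ?thesis by (simp only: real_sqrt_zero) (intro tendsto_mult tendsto_add a0 d0 tendsto_const)
  qed
  then have "(\<lambda>n. B * (sqrt (a n) * sqrt (d n) + sqrt (a n) * sqrt D + sqrt W * sqrt (d n))) \<longlonglongrightarrow> 0"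
    by (simp only: real_sqrt_zero mult_zero_left mult_zero_right add_0_left add_0_right)
  then show ?thesis by (rule tendsto_by_bound[OF bound])
qed

lemma conv_l:
  fixes \<phi> :: "nat \<Rightarrow> 'a \<Rightarrow> real"
  assumes fin: "finite_measure M"
    and [measurable]: "w \<in> borel_measurable M"
    and iw: "integrable M (\<lambda>x. (w x)\<^sup>2)"
    and L: "bnd M L" and p: "\<And>n. bnd M (\<phi> n)"
    and ca: "(\<lambda>n. \<integral>x. (\<phi> n x - w x)\<^sup>2 \<partial>M) \<longlonglongrightarrow> 0"
  shows "(\<lambda>n. \<integral>x. L x * (\<phi> n x)\<^sup>2 \<partial>M) \<longlonglongrightarrow> (\<integral>x. L x * (w x)\<^sup>2 \<partial>M)"
proof -
  obtain B where B: "B \<ge> 0" and [measurable]: "L \<in> borel_measurable M" and LB: "AE x in M. norm (L x) \<le> B"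
    using bnd_bound_nonneg[OF L] by metis
  have [measurable]: "\<phi> n \<in> borel_measurable M" for n
    using p bnd_def by blast
  have ip: "integrable M (\<lambda>x. (\<phi> n x)\<^sup>2)" for n
    by (rule bnd_integrable[OF fin bnd_power[OF p]])
  have ia: "integrable M (\<lambda>x. (\<phi> n x - w x)\<^sup>2)" for n
    by (rule sq_diff_int_real) (auto intro: ip iw)
  define a where "a n = (\<integral>x. (\<phi> n x - w x)\<^sup>2 \<partial>M)" for n
  define W where "W = (\<integral>x. (w x)\<^sup>2 \<partial>M)"
  have m1: "(\<lambda>x. \<phi> n x - w x) \<in> borel_measurable M" for n by measurable
  have cs: "integrable M (\<lambda>x. (\<phi> n x - w x) * w x)"
     "(\<integral>x. \<bar>(\<phi> n x - w x) * w x\<bar> \<partial>M) \<le> sqrt (a n) * sqrt W" for n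
    using CS_int[OF m1 _ ia iw] unfolding a_def W_def by auto
  have i1: "integrable M (\<lambda>x. \<bar>(\<phi> n x - w x) * w x\<bar>)" for n
    using integrable_abs[OF cs(1)] .
  have ipn: "integrable M (\<lambda>x. L x * (\<phi> n x)\<^sup>2)" for n
    by (rule bnd_integrable[OF fin bnd_mult[OF L bnd_power[OF p]]])
  have iLw: "integrable M (\<lambda>x. L x * (w x)\<^sup>2)"
  proof (rule Bochner_Integration.integrable_bound[OF integrable_mult_right[OF iw, of B]])
    show "AE x in M. norm (L x * (w x)\<^sup>2) \<le> norm (B * (w x)\<^sup>2)"
      using LB
    proof (rule eventually_mono)
      fix x assume "norm (L x) \<le> B"
      then show "norm (L x * (w x)\<^sup>2) \<le> norm (B * (w x)\<^sup>2)"
        using B by (simp add: abs_mult mult_right_mono)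
    qed
  qed simp
  have pw: "\<bar>L x * (\<phi> n x)\<^sup>2 - L x * (w x)\<^sup>2\<bar> \<le> B * ((\<phi> n x - w x)\<^sup>2 + 2 * \<bar>(\<phi> n x - w x) * w x\<bar>)"
    if LxB: "norm (L x) \<le> B" for n x
  proof -
    have e: "L x * (\<phi> n x)\<^sup>2 - L x * (w x)\<^sup>2 = L x * ((\<phi> n x - w x)\<^sup>2 + 2 * ((\<phi> n x - w x) * w x))"
      by (simp add: power2_eq_square algebra_simps)
    have "\<bar>(\<phi> n x - w x)\<^sup>2 + 2 * ((\<phi> n x - w x) * w x)\<bar> \<le> (\<phi> n x - w x)\<^sup>2 + 2 * \<bar>(\<phi> n x - w x) * w x\<bar>"
      using abs_triangle_ineq[of "(\<phi> n x - w x)\<^sup>2" "2 * ((\<phi> n x - w x) * w x)"]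
      by (simp only: abs_power2 abs_mult[of 2] abs_numeral)
    then show ?thesis unfolding e abs_mult[of "L x"]
      using LxB B by (intro mult_mono) auto
  qed
  have bound: "\<bar>(\<integral>x. L x * (\<phi> n x)\<^sup>2 \<partial>M) - (\<integral>x. L x * (w x)\<^sup>2 \<partial>M)\<bar>
      \<le> B * (a n + 2 * (sqrt (a n) * sqrt W))" for n
  proof -
    have "\<bar>(\<integral>x. L x * (\<phi> n x)\<^sup>2 \<partial>M) - (\<integral>x. L x * (w x)\<^sup>2 \<partial>M)\<bar>
        = \<bar>\<integral>x. L x * (\<phi> n x)\<^sup>2 - L x * (w x)\<^sup>2 \<partial>M\<bar>"
      using ipn iLw by simp
    also have "\<dots> \<le> (\<integral>x. \<bar>L x * (\<phi> n x)\<^sup>2 - L x * (w x)\<^sup>2\<bar> \<partial>M)"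
      by (rule integral_abs_bound)
    also have "\<dots> \<le> (\<integral>x. B * ((\<phi> n x - w x)\<^sup>2 + 2 * \<bar>(\<phi> n x - w x) * w x\<bar>) \<partial>M)"
      by (rule integral_mono_AE) (use ipn iLw ia i1 LB pw in \<open>auto elim!: eventually_mono\<close>)
    also have "\<dots> = B * (a n + 2 * (\<integral>x. \<bar>(\<phi> n x - w x) * w x\<bar> \<partial>M))"
      using ia i1 unfolding a_def by simp
    also have "\<dots> \<le> B * (a n + 2 * (sqrt (a n) * sqrt W))"
      using cs(2) B by (intro mult_left_mono add_mono) auto
    finally show ?thesis .
  qed
  have a0: "(\<lambda>n. sqrt (a n)) \<longlonglongrightarrow> 0"
    using tendsto_real_sqrt[OF ca] unfolding a_def by simp
  have a1: "a \<longlonglongrightarrow> 0" using ca unfolding a_def[abs_def] .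
  have "(\<lambda>n. B * (a n + 2 * (sqrt (a n) * sqrt W))) \<longlonglongrightarrow> B * (0 + 2 * (0 * sqrt W))"
    by (intro tendsto_mult tendsto_add a0 a1 tendsto_const)
  then have "(\<lambda>n. B * (a n + 2 * (sqrt (a n) * sqrt W))) \<longlonglongrightarrow> 0"
    by (simp only: mult_zero_left mult_zero_right add_0_left add_0_right)
  then show ?thesis by (rule tendsto_by_bound[OF bound])
qed



lemma int_Lw2:
  fixes L w :: "'a \<Rightarrow> real"
  assumes "bnd M L" "w \<in> borel_measurable M" "integrable M (\<lambda>x. (w x)\<^sup>2)"
  shows "integrable M (\<lambda>x. L x * (w x)\<^sup>2)"
proof -
  obtain B where B: "B \<ge> 0" and [measurable]: "L \<in> borel_measurable M" and LB: "AE x in M. norm (L x) \<le> B"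
    using bnd_bound_nonneg[OF assms(1)] by metis
  note [measurable] = assms(2)
  show ?thesis
  proof (rule Bochner_Integration.integrable_bound[OF integrable_mult_right[OF assms(3), of B]])
    show "AE x in M. norm (L x * (w x)\<^sup>2) \<le> norm (B * (w x)\<^sup>2)"
      using LB
    proof (rule eventually_mono)
      fix x assume "norm (L x) \<le> B"
      then show "norm (L x * (w x)\<^sup>2) \<le> norm (B * (w x)\<^sup>2)"
        using B by (simp add: abs_mult mult_right_mono)
    qed
  qed simp
qed

lemma final_ineq:
  fixes a b K \<tau> :: real
  assumes "\<tau> > 0" "\<tau> * K\<^sup>2 < 4"
  shows "a\<^sup>2 + \<tau> * b\<^sup>2 - \<tau> * K * a * b \<ge> 0"
proof -
  have 1: "0 \<le> (a - \<tau> * K * b / 2)\<^sup>2" by simp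
  have 2: "0 \<le> \<tau> * b\<^sup>2 * (1 - \<tau> * K\<^sup>2 / 4)" using assms by simp
  have "a\<^sup>2 + \<tau> * b\<^sup>2 - \<tau> * K * a * b = (a - \<tau> * K * b / 2)\<^sup>2 + \<tau> * b\<^sup>2 * (1 - \<tau> * K\<^sup>2 / 4)"
    by (simp add: power2_eq_square field_simps)
  then show ?thesis using 1 2 by linarith
qed

theorem lemma5:
  fixes \<Omega> :: "'a::euclidean_space set"
    and \<tau> :: real and w :: "'a \<Rightarrow> real" and Gw :: "'a \<Rightarrow> 'a"
    and \<psi> :: "'a \<Rightarrow> real" and G\<psi> :: "'a \<Rightarrow> 'a" and H\<psi> :: "'a \<Rightarrow> 'a \<Rightarrow> 'a"
    and C_S :: real
  assumes "DIM('a) \<le> 3"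
    and "bounded_polytopal_domain \<Omega>" and "lipschitz_boundary \<Omega>"
    and "\<tau> > 0"
    and "H10 \<Omega> w Gw"
    and "W2inf \<Omega> \<psi> G\<psi> H\<psi>"
  shows "((AE x in lebesgue. x \<in> \<Omega> \<longrightarrow> lap H\<psi> x \<le> 0) \<longrightarrow>
            form_A \<Omega> \<tau> G\<psi> w Gw w Gw \<ge> (Lp_norm \<Omega> 2 w)\<^sup>2 + \<tau> * (Lp_norm \<Omega> 2 Gw)\<^sup>2)
       \<and> ((\<forall>v Gv. H10 \<Omega> v Gv \<longrightarrow> set_integrable lebesgue \<Omega> (\<lambda>x. \<bar>v x\<bar> powr 6) \<and>
                   Lp_norm \<Omega> 6 v \<le> C_S * Lp_norm \<Omega> 2 Gv) \<longrightarrow>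
          \<tau> * C_S\<^sup>2 * (Lp_norm \<Omega> 3 (lap H\<psi>))\<^sup>2 < 4 \<longrightarrow>
            form_A \<Omega> \<tau> G\<psi> w Gw w Gw \<ge> (1/2) * (Lp_norm \<Omega> 2 w)\<^sup>2 + (\<tau>/2) * (Lp_norm \<Omega> 2 Gw)\<^sup>2)"
proof -
  have op: "open \<Omega>" and bd: "bounded \<Omega>"
    using assms(2) by (auto simp: bounded_polytopal_domain_def)
  note S = sets_Omega[OF op bd]
  define M where "M = lebesgue_on \<Omega>"
  have fin: "finite_measure M" using S(2) by (simp add: M_def)
  have LI: "(LINT x:\<Omega>|lebesgue. f x) = integral\<^sup>L M f" for f :: "'a \<Rightarrow> real"
    using LINT_restrict[OF S(1)] by (simp add: M_def)
  have SI: "set_integrable lebesgue \<Omega> f \<longleftrightarrow> integrable M f" for f :: "'a \<Rightarrow> real"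
    using set_integrable_restrict[OF S(1)] by (simp add: M_def)
  have AEc: "(AE x in lebesgue. x \<in> \<Omega> \<longrightarrow> P x) \<longleftrightarrow> (AE x in M. P x)" for P
    unfolding M_def using AE_restrict_space_iff[of \<Omega> lebesgue P] S(1) by simp
  have eb: "bnd M f" if "ess_bounded \<Omega> f" for f :: "'a \<Rightarrow> 'b::euclidean_space"
    using that unfolding ess_bounded_def bnd_def AEc M_def by blast
  obtain \<phi> :: "nat \<Rightarrow> 'a \<Rightarrow> real" where tf: "\<And>n. test_fun \<Omega> (\<phi> n)"
    and c1: "(\<lambda>n. LINT x:\<Omega>|lebesgue. (\<phi> n x - w x)\<^sup>2) \<longlonglongrightarrow> 0"
    and c2: "(\<lambda>n. LINT x:\<Omega>|lebesgue. (norm (grad (\<phi> n) x - Gw x))\<^sup>2) \<longlonglongrightarrow> 0"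
    and Lw: "L2 \<Omega> w" and LGw: "L2 \<Omega> Gw"
    using assms(5) unfolding H10_def by blast
  have wm [measurable]: "w \<in> borel_measurable M" and iw: "integrable M (\<lambda>x. (w x)\<^sup>2)"
    using Lw unfolding L2_def M_def[symmetric] SI by auto
  have Gwm [measurable]: "Gw \<in> borel_measurable M" and iGw: "integrable M (\<lambda>x. (norm (Gw x))\<^sup>2)"
    using LGw unfolding L2_def M_def[symmetric] SI by auto
  have ca: "(\<lambda>n. \<integral>x. (\<phi> n x - w x)\<^sup>2 \<partial>M) \<longlonglongrightarrow> 0" using c1 unfolding LI .
  have cd: "(\<lambda>n. \<integral>x. (norm (grad (\<phi> n) x - Gw x))\<^sup>2 \<partial>M) \<longlonglongrightarrow> 0" using c2 unfolding LI .
  have Gb: "bnd M G\<psi>" using assms(6) eb unfolding W2inf_def by blast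
  have Hb: "bnd M (\<lambda>x. H\<psi> x i)" if "i \<in> Basis" for i
    using assms(6) eb that unfolding W2inf_def by blast
  have wg: "weak_grad \<Omega> (\<lambda>x. G\<psi> x \<bullet> i) (\<lambda>x. H\<psi> x i)" if "i \<in> Basis" for i
    using assms(6) that unfolding W2inf_def by blast
  have lapb: "bnd M (lap H\<psi>)"
  proof -
    have "bnd M (\<lambda>x. \<Sum>i\<in>Basis. H\<psi> x i \<bullet> i)"
      by (rule bnd_sum) (auto intro: bnd_inner Hb bnd_const)
    then show ?thesis unfolding lap_def[abs_def] .
  qed
  have tfb: "bnd M f" "bnd M (grad f)" if "test_fun \<Omega> f" for f
  proof -
    have C: "C_inf f" using that by (simp add: test_fun_def)
    show "bnd M f" unfolding M_def by (rule bnd_cont[OF bd S(1) C_inf_D(2)[OF C]])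
    show "bnd M (grad f)" unfolding M_def by (rule bnd_cont[OF bd S(1) grad_cont[OF C]])
  qed
  have key: "2 * (\<integral>x. f x * (G\<psi> x \<bullet> grad f x) \<partial>M) = - (\<integral>x. lap H\<psi> x * (f x)\<^sup>2 \<partial>M)"
    if f: "test_fun \<Omega> f" for f
  proof -
    have C: "C_inf f" using f by (simp add: test_fun_def)
    have ff: "test_fun \<Omega> (\<lambda>x. f x * f x)" by (rule test_fun_sq[OF f])
    have each: "(\<integral>x. (G\<psi> x \<bullet> i) * (2 * f x * (grad f x \<bullet> i)) \<partial>M) = - (\<integral>x. (H\<psi> x i \<bullet> i) * (f x)\<^sup>2 \<partial>M)"
      if i: "i \<in> Basis" for i
    proof -
      have "(LINT x:\<Omega>|lebesgue. (G\<psi> x \<bullet> i) * (grad (\<lambda>x. f x * f x) x \<bullet> i)) =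
            - (LINT x:\<Omega>|lebesgue. (H\<psi> x i \<bullet> i) * (f x * f x))"
        using wg[OF i] ff i unfolding weak_grad_def by blast
      moreover have "grad (\<lambda>x. f x * f x) x \<bullet> i = 2 * f x * (grad f x \<bullet> i)" for x
        by (simp add: grad_sq[OF C])
      ultimately show ?thesis unfolding LI by (simp add: power2_eq_square)
    qed
    have ints1: "integrable M (\<lambda>x. (G\<psi> x \<bullet> i) * (2 * f x * (grad f x \<bullet> i)))" if "i \<in> Basis" for i
      by (rule bnd_integrable[OF fin])
         (intro bnd_mult bnd_inner Gb bnd_const tfb[OF f])
    have ints2: "integrable M (\<lambda>x. (H\<psi> x i \<bullet> i) * (f x)\<^sup>2)" if "i \<in> Basis" for i
      by (rule bnd_integrable[OF fin])
         (intro bnd_mult bnd_inner Hb[OF that] bnd_const bnd_power tfb[OF f])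
    have "2 * (\<integral>x. f x * (G\<psi> x \<bullet> grad f x) \<partial>M) = (\<integral>x. 2 * (f x * (G\<psi> x \<bullet> grad f x)) \<partial>M)"
      by simp
    also have "\<dots> = (\<integral>x. (\<Sum>i\<in>Basis. (G\<psi> x \<bullet> i) * (2 * f x * (grad f x \<bullet> i))) \<partial>M)"
    proof (rule Bochner_Integration.integral_cong[OF refl])
      fix x
      have "2 * (f x * (G\<psi> x \<bullet> grad f x)) = 2 * (f x * (\<Sum>i\<in>Basis. (G\<psi> x \<bullet> i) * (grad f x \<bullet> i)))"
        by (simp only: euclidean_inner[of "G\<psi> x" "grad f x"])
      also have "\<dots> = (\<Sum>i\<in>Basis. 2 * (f x * ((G\<psi> x \<bullet> i) * (grad f x \<bullet> i))))"
        by (simp only: sum_distrib_left)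
      also have "\<dots> = (\<Sum>i\<in>Basis. (G\<psi> x \<bullet> i) * (2 * f x * (grad f x \<bullet> i)))"
        by (rule sum.cong[OF refl]) (simp only: mult_ac)
      finally show "2 * (f x * (G\<psi> x \<bullet> grad f x)) = (\<Sum>i\<in>Basis. (G\<psi> x \<bullet> i) * (2 * f x * (grad f x \<bullet> i)))" .
    qed
    also have "\<dots> = (\<Sum>i\<in>Basis. (\<integral>x. (G\<psi> x \<bullet> i) * (2 * f x * (grad f x \<bullet> i)) \<partial>M))"
      by (rule Bochner_Integration.integral_sum[where f = "\<lambda>i x. (G\<psi> x \<bullet> i) * (2 * f x * (grad f x \<bullet> i))"]) (rule ints1)
    also have "\<dots> = (\<Sum>i\<in>Basis. - (\<integral>x. (H\<psi> x i \<bullet> i) * (f x)\<^sup>2 \<partial>M))"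
      by (rule sum.cong[OF refl]) (rule each)
    also have "\<dots> = - (\<integral>x. (\<Sum>i\<in>Basis. (H\<psi> x i \<bullet> i) * (f x)\<^sup>2) \<partial>M)"
      using Bochner_Integration.integral_sum[where f = "\<lambda>i x. (H\<psi> x i \<bullet> i) * (f x)\<^sup>2" and I = Basis and M = M, OF ints2]
      by (simp add: sum_negf)
    also have "\<dots> = - (\<integral>x. lap H\<psi> x * (f x)\<^sup>2 \<partial>M)"
      by (simp add: lap_def sum_distrib_right)
    finally show ?thesis .
  qed
  have blim: "(\<lambda>n. \<integral>x. \<phi> n x * (G\<psi> x \<bullet> grad (\<phi> n) x) \<partial>M) \<longlonglongrightarrow> (\<integral>x. w x * (G\<psi> x \<bullet> Gw x) \<partial>M)"
    by (rule conv_b[OF fin wm Gwm iw iGw Gb tfb(1)[OF tf] tfb(2)[OF tf] ca cd])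
  have llim: "(\<lambda>n. \<integral>x. lap H\<psi> x * (\<phi> n x)\<^sup>2 \<partial>M) \<longlonglongrightarrow> (\<integral>x. lap H\<psi> x * (w x)\<^sup>2 \<partial>M)"
    by (rule conv_l[OF fin wm iw lapb tfb(1)[OF tf] ca])
  define Bw where "Bw = (\<integral>x. w x * (G\<psi> x \<bullet> Gw x) \<partial>M)"
  define Lw2 where "Lw2 = (\<integral>x. lap H\<psi> x * (w x)\<^sup>2 \<partial>M)"
  have ident: "2 * Bw = - Lw2"
  proof -
    have "(\<lambda>n. 2 * (\<integral>x. \<phi> n x * (G\<psi> x \<bullet> grad (\<phi> n) x) \<partial>M)) \<longlonglongrightarrow> 2 * Bw"
      unfolding Bw_def by (intro tendsto_mult tendsto_const blim)
    moreover have "(\<lambda>n. 2 * (\<integral>x. \<phi> n x * (G\<psi> x \<bullet> grad (\<phi> n) x) \<partial>M)) \<longlonglongrightarrow> - Lw2"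
      unfolding key[OF tf] Lw2_def by (intro tendsto_minus llim)
    ultimately show ?thesis by (rule LIMSEQ_unique)
  qed
  define W where "W = (\<integral>x. (w x)\<^sup>2 \<partial>M)"
  define D where "D = (\<integral>x. (norm (Gw x))\<^sup>2 \<partial>M)"
  have W0: "W \<ge> 0" and D0: "D \<ge> 0" unfolding W_def D_def by (auto intro!: integral_nonneg_AE)
  have nw: "Lp_norm \<Omega> 2 w = sqrt W"
    unfolding Lp_norm_def LI W_def by (simp add: powr_half_sqrt integral_nonneg_AE)
  have nGw: "Lp_norm \<Omega> 2 Gw = sqrt D"
  proof -
    have "(LINT x:\<Omega>|lebesgue. norm (Gw x) powr 2) = D"
      using LINT_restrict[OF S(1), of "\<lambda>x. norm (Gw x) powr 2"] unfolding D_def M_def by simp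
    then show ?thesis unfolding Lp_norm_def using D0 by (simp add: powr_half_sqrt)
  qed
  have fA: "form_A \<Omega> \<tau> G\<psi> w Gw w Gw = W + \<tau> * (D + Bw)"
  proof -
    have "L2_inner \<Omega> w w = W" unfolding L2_inner_def LI W_def by (simp add: power2_eq_square)
    moreover have "form_a \<Omega> Gw Gw = D"
      using LINT_restrict[OF S(1), of "\<lambda>x. Gw x \<bullet> Gw x"] unfolding form_a_def D_def M_def
      by (simp add: power2_norm_eq_inner)
    moreover have "form_b \<Omega> G\<psi> w Gw = Bw"
      unfolding form_b_def LI Bw_def by simp
    ultimately show ?thesis unfolding form_A_def by simp
  qed
  have sqW: "(sqrt W)\<^sup>2 = W" using W0 by simp
  have sqD: "(sqrt D)\<^sup>2 = D" using D0 by simp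
  show ?thesis
  proof (intro conjI impI)
    assume "AE x in lebesgue. x \<in> \<Omega> \<longrightarrow> lap H\<psi> x \<le> 0"
    then have "AE x in M. lap H\<psi> x \<le> 0" unfolding AEc .
    then have "0 \<le> (\<integral>x. - (lap H\<psi> x * (w x)\<^sup>2) \<partial>M)"
      by (intro integral_nonneg_AE) (auto elim!: eventually_mono intro: mult_nonpos_nonneg)
    then have "Lw2 \<le> 0" unfolding Lw2_def by simp
    then show "form_A \<Omega> \<tau> G\<psi> w Gw w Gw \<ge> (Lp_norm \<Omega> 2 w)\<^sup>2 + \<tau> * (Lp_norm \<Omega> 2 Gw)\<^sup>2"
      unfolding fA nw nGw sqW sqD using ident assms(4) by simp
  next
    assume hyp: "\<forall>v Gv. H10 \<Omega> v Gv \<longrightarrow> set_integrable lebesgue \<Omega> (\<lambda>x. \<bar>v x\<bar> powr 6) \<and>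
                   Lp_norm \<Omega> 6 v \<le> C_S * Lp_norm \<Omega> 2 Gv"
      and tau: "\<tau> * C_S\<^sup>2 * (Lp_norm \<Omega> 3 (lap H\<psi>))\<^sup>2 < 4"
    have h6: "set_integrable lebesgue \<Omega> (\<lambda>x. \<bar>w x\<bar> powr 6)" and N6: "Lp_norm \<Omega> 6 w \<le> C_S * Lp_norm \<Omega> 2 Gw"
      using hyp assms(5) by blast+
    have i6: "integrable M (\<lambda>x. (w x)^6)" using h6 unfolding SI by simp
    have i3: "integrable M (\<lambda>x. \<bar>lap H\<psi> x\<bar>^3)"
      by (rule bnd_integrable[OF fin bnd_power[OF bnd_abs[OF lapb]]])
    have lm [measurable]: "lap H\<psi> \<in> borel_measurable M" using lapb bnd_def by blast
    have ilw: "integrable M (\<lambda>x. lap H\<psi> x * (w x)^2)" by (rule int_Lw2[OF lapb wm iw])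
    have hol: "\<bar>Lw2\<bar> \<le> (\<integral>x. \<bar>lap H\<psi> x\<bar>^3 \<partial>M) powr (1/3) * (\<integral>x. (w x)^6 \<partial>M) powr (1/6) * W powr (1/2)"
      unfolding Lw2_def W_def by (rule holder3[OF lm wm i3 i6 iw ilw])
    define N3 where "N3 = Lp_norm \<Omega> 3 (lap H\<psi>)"
    define N6 where "N6 = Lp_norm \<Omega> 6 w"
    have eN3: "N3 = (\<integral>x. \<bar>lap H\<psi> x\<bar>^3 \<partial>M) powr (1/3)"
      unfolding N3_def Lp_norm_def LI by simp
    have eN6: "N6 = (\<integral>x. (w x)^6 \<partial>M) powr (1/6)"
      unfolding N6_def Lp_norm_def LI by simp
    have eW: "W powr (1/2) = sqrt W" using W0 by (simp add: powr_half_sqrt)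
    have hol2: "\<bar>Lw2\<bar> \<le> N3 * N6 * sqrt W" using hol unfolding eN3 eN6 eW .
    have N30: "N3 \<ge> 0" and N60: "N6 \<ge> 0" unfolding eN3 eN6 by simp_all
    have N6b: "N6 \<le> \<bar>C_S\<bar> * sqrt D" using N6 unfolding N6_def[symmetric] nGw
      by (metis abs_ge_self mult_right_mono order_trans real_sqrt_ge_zero D0)
    have "\<bar>Lw2\<bar> \<le> N3 * (\<bar>C_S\<bar> * sqrt D) * sqrt W"
      using hol2 N6b N30 by (meson mult_left_mono mult_right_mono order_trans real_sqrt_ge_zero W0 mult_nonneg_nonneg)
    then have Lb: "Lw2 \<le> N3 * \<bar>C_S\<bar> * sqrt W * sqrt D" by (simp add: mult_ac)
    define X where "X = N3 * \<bar>C_S\<bar> * sqrt W * sqrt D"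
    have tK: "\<tau> * (N3 * \<bar>C_S\<bar>)\<^sup>2 < 4" using tau unfolding N3_def[symmetric]
      by (simp add: power_mult_distrib mult_ac)
    have fi: "(sqrt W)\<^sup>2 + \<tau> * (sqrt D)\<^sup>2 - \<tau> * (N3 * \<bar>C_S\<bar>) * sqrt W * sqrt D \<ge> 0"
      by (rule final_ineq[OF assms(4) tK])
    have eX: "\<tau> * (N3 * \<bar>C_S\<bar>) * sqrt W * sqrt D = \<tau> * X" by (simp add: X_def mult_ac)
    have fi': "W + \<tau> * D - \<tau> * X \<ge> 0" using fi unfolding eX sqW sqD .
    have t1: "\<tau> * Lw2 \<le> \<tau> * X" using Lb assms(4) unfolding X_def[symmetric] by simp
    have "Bw = - Lw2 / 2" using ident by simp
    then have t2: "\<tau> * Bw = - (\<tau> * Lw2) / 2" by simp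
    have t3: "\<tau> * (D + Bw) = \<tau> * D + \<tau> * Bw" by (simp add: distrib_left)
    have t4: "\<tau> / 2 * D = (\<tau> * D) / 2" by simp
    have "W + \<tau> * (D + Bw) \<ge> 1/2 * W + \<tau> / 2 * D"
      unfolding t3 t4 using fi' t1 t2 by linarith
    then show "form_A \<Omega> \<tau> G\<psi> w Gw w Gw \<ge> (1/2) * (Lp_norm \<Omega> 2 w)\<^sup>2 + (\<tau>/2) * (Lp_norm \<Omega> 2 Gw)\<^sup>2"
      unfolding fA nw nGw sqW sqD .
  qed
qed


end
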